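(* Let $d,n\in\mathbb{N}$, $R>1$, $\epsilon\ge0$, and let $K_r(x,y)$ be a polynomial in $(x,y)$ whose operator $\mathcal K_rf(x)=\int_{-R}^RK_r(x,y)f(y)\,dy$ satisfies $\|\mathcal K_rT_k-T_k\|_{1,\mathrm{cheb}}\le\epsilon$ for all $0\le k\le d$. Let $K_{r,n}(x,y)=\prod_{i=1}^nK_r(x_i,y_i)$ and $\mathcal K_{r,n}f(x)=\int_{[-R,R]^n}K_{r,n}(x,y)f(y)\,dy$. Then for every $\alpha\in\mathbb{N}_0^n$ with $\alpha_i\le d$ for all $i$, \[ \|\mathcal K_{r,n}T_\alpha-T_\alpha\|_{1,\mathrm{cheb}}\le\epsilon\sum_{i=0}^{n-1}(1+\epsilon)^i. \] Moreover, if $\epsilon\le1/n$, then $\|\mathcal K_{r,n}T_\alpha-T_\alpha\|_{1,\mathrm{cheb}}\le e\,\epsilon\, n$.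
   Context: $T_k(x)=\cos(k\arccos x)$ is the Chebyshev polynomial of the first kind; for $\alpha\in\mathbb{N}_0^n$, $T_\alpha(x)=\prod_iT_{\alpha_i}(x_i)$; for a polynomial $p=\sum_\alpha p_\alpha T_\alpha$, $\|p\|_{1,\mathrm{cheb}}=\sum_\alpha|p_\alpha|$. $e$ is Euler's number. *)

theory Defs
  imports "HOL-Analysis.Analysis"
begin

text \<open>Chebyshev polynomials of the first kind, as polynomial functions on all of the reals
  (so that T k x = cos (k * arccos x) for x in [-1,1]).\<close>
fun cheb_T :: "nat \<Rightarrow> real \<Rightarrow> real" where
  "cheb_T 0 x = 1"
| "cheb_T (Suc 0) x = x"
| "cheb_T (Suc (Suc k)) x = 2 * x * cheb_T (Suc k) x - cheb_T k x"

definition cheb_Tn :: "nat ^ 'n \<Rightarrow> real ^ 'n \<Rightarrow> real" where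
  "cheb_Tn \<alpha> x = (\<Prod>i\<in>UNIV. cheb_T (\<alpha> $ i) (x $ i))"

definition cheb_rep1 :: "(real \<Rightarrow> real) \<Rightarrow> (nat \<Rightarrow> real) \<Rightarrow> bool" where
  "cheb_rep1 f p \<longleftrightarrow> finite {k. p k \<noteq> 0} \<and>
     (\<forall>x. f x = (\<Sum>k\<in>{k. p k \<noteq> 0}. p k * cheb_T k x))"

definition cheb_norm1_1 :: "(real \<Rightarrow> real) \<Rightarrow> real" where
  "cheb_norm1_1 f = (let p = (THE p. cheb_rep1 f p) in (\<Sum>k\<in>{k. p k \<noteq> 0}. \<bar>p k\<bar>))"

definition cheb_rep :: "(real ^ 'n \<Rightarrow> real) \<Rightarrow> (nat ^ 'n \<Rightarrow> real) \<Rightarrow> bool" where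
  "cheb_rep f p \<longleftrightarrow> finite {\<alpha>. p \<alpha> \<noteq> 0} \<and>
     (\<forall>x. f x = (\<Sum>\<alpha>\<in>{\<alpha>. p \<alpha> \<noteq> 0}. p \<alpha> * cheb_Tn \<alpha> x))"

definition cheb_norm1 :: "(real ^ 'n \<Rightarrow> real) \<Rightarrow> real" where
  "cheb_norm1 f = (let p = (THE p. cheb_rep f p) in (\<Sum>\<alpha>\<in>{\<alpha>. p \<alpha> \<noteq> 0}. \<bar>p \<alpha>\<bar>))"

definition is_bivariate_poly :: "(real \<Rightarrow> real \<Rightarrow> real) \<Rightarrow> bool" where
  "is_bivariate_poly K \<longleftrightarrow> (\<exists>N c. \<forall>x y. K x y = (\<Sum>i\<le>N. \<Sum>j\<le>N. c i j * x ^ i * y ^ j))"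

definition kop1 :: "real \<Rightarrow> (real \<Rightarrow> real \<Rightarrow> real) \<Rightarrow> (real \<Rightarrow> real) \<Rightarrow> real \<Rightarrow> real" where
  "kop1 R K f x = integral {-R..R} (\<lambda>y. K x y * f y)"

definition kopn :: "real \<Rightarrow> (real \<Rightarrow> real \<Rightarrow> real) \<Rightarrow> (real ^ 'n \<Rightarrow> real) \<Rightarrow> real ^ 'n \<Rightarrow> real" where
  "kopn R K f x = integral (cbox (\<chi> i. -R) (\<chi> i. R))
      (\<lambda>y. (\<Prod>i\<in>UNIV. K (x $ i) (y $ i)) * f y)"

end

theory Submission
  imports Defs "HOL-Computational_Algebra.Polynomial"
begin


fun Tp :: "nat \<Rightarrow> real poly" where
  "Tp 0 = 1"
| "Tp (Suc 0) = [:0,1:]"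
| "Tp (Suc (Suc k)) = [:0,2:] * Tp (Suc k) - Tp k"

lemma poly_Tp: "poly (Tp k) x = cheb_T k x"
  by (induction k rule: Tp.induct) auto

lemma cheb_T_eq: "cheb_T k = poly (Tp k)"
  by (simp add: fun_eq_iff poly_Tp)

lemma cheb_T_cont: "continuous_on S (cheb_T k)"
  unfolding cheb_T_eq by (rule continuous_on_poly) (rule continuous_on_id)

lemma Tp_deg: "degree (Tp k) \<le> k \<and> coeff (Tp k) k = (if k = 0 then 1 else 2 ^ (k - 1))"
proof (induction k rule: Tp.induct)
  case 1 then show ?case by simp
next
  case 2 then show ?case by simp
next
  case (3 k)
  have e: "[:0,2:] * Tp (Suc k) = pCons 0 (smult 2 (Tp (Suc k)))"
    by simp
  have "degree (smult 2 (Tp (Suc k))) \<le> Suc k" using 3 by simp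
  then have d1: "degree ([:0,2:] * Tp (Suc k)) \<le> Suc (Suc k)"
    unfolding e using degree_pCons_le[of 0 "smult 2 (Tp (Suc k))"] by linarith
  have d2: "degree (Tp k) \<le> Suc (Suc k)" using 3 by simp
  have "degree (Tp (Suc (Suc k))) \<le> Suc (Suc k)"
    using degree_diff_le[OF d1 d2] by simp
  moreover have "coeff (Tp k) (Suc (Suc k)) = 0" using 3 by (simp add: coeff_eq_0)
  moreover have "coeff ([:0,2:] * Tp (Suc k)) (Suc (Suc k)) = 2 * 2 ^ k"
    using 3 by (simp add: e)
  ultimately show ?case by simp
qed

lemma uniq1:
  assumes "finite F" "\<And>x. (\<Sum>k\<in>F. c k * cheb_T k x) = 0"
  shows "\<forall>k\<in>F. c k = 0"
proof (rule ccontr)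
  assume nz: "\<not> (\<forall>k\<in>F. c k = 0)"
  define A where "A = {k\<in>F. c k \<noteq> 0}"
  have An: "A \<noteq> {}" "finite A" using nz assms(1) by (auto simp: A_def)
  define m where "m = Max A"
  have mA: "m \<in> A" using An by (simp add: m_def)
  have mle: "\<And>k. k \<in> A \<Longrightarrow> k \<le> m" using An by (simp add: m_def)
  define P where "P = (\<Sum>k\<in>F. smult (c k) (Tp k))"
  have "\<forall>x. poly P x = 0" using assms(2) by (simp add: P_def poly_sum poly_Tp)
  then have "P = 0" using poly_all_0_iff_0 by blast
  moreover have "coeff P m = (\<Sum>k\<in>F. c k * coeff (Tp k) m)" by (simp add: P_def coeff_sum)
  moreover have "(\<Sum>k\<in>F. c k * coeff (Tp k) m) = (\<Sum>k\<in>F. if k = m then c m * coeff (Tp m) m else 0)"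
  proof (rule sum.cong[OF refl])
    fix k assume k: "k \<in> F"
    show "c k * coeff (Tp k) m = (if k = m then c m * coeff (Tp m) m else 0)"
    proof (cases "k = m")
      case False
      show ?thesis
      proof (cases "c k = 0")
        case False
        then have "k < m" using mle[of k] k \<open>k \<noteq> m\<close> by (auto simp: A_def)
        then have "coeff (Tp k) m = 0" using Tp_deg[of k] by (simp add: coeff_eq_0)
        then show ?thesis using \<open>k \<noteq> m\<close> by simp
      qed (use \<open>k \<noteq> m\<close> in simp)
    qed simp
  qed
  moreover have "(\<Sum>k\<in>F. if k = m then c m * coeff (Tp m) m else 0) = c m * coeff (Tp m) m"
    using mA assms(1) by (simp add: A_def)
  moreover have "c m * coeff (Tp m) m \<noteq> 0" using mA Tp_deg[of m] by (simp add: A_def)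
  ultimately show False by simp
qed


lemma rep1_sum: "cheb_rep1 f q \<Longrightarrow> finite F \<Longrightarrow> {k. q k \<noteq> 0} \<subseteq> F \<Longrightarrow> f x = (\<Sum>k\<in>F. q k * cheb_T k x)"
  unfolding cheb_rep1_def by (auto intro!: sum.mono_neutral_left)

lemma norm1_eq:
  assumes B: "finite B" and f: "\<And>x. f x = (\<Sum>k\<in>B. c k * cheb_T k x)"
  shows "cheb_norm1_1 f = (\<Sum>k\<in>B. \<bar>c k\<bar>)"
proof -
  define p where "p k = (if k \<in> B then c k else 0)" for k
  have sub: "{k. p k \<noteq> 0} \<subseteq> B" by (auto simp: p_def split: if_splits)
  have fin: "finite {k. p k \<noteq> 0}" using sub B finite_subset by blast
  have fp: "f x = (\<Sum>k\<in>B. p k * cheb_T k x)" for x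
    unfolding f by (intro sum.cong) (auto simp: p_def)
  have rp: "cheb_rep1 f p"
    unfolding cheb_rep1_def using fin fp sub B by (auto intro!: sum.mono_neutral_right)
  have uq: "q = p" if q: "cheb_rep1 f q" for q
  proof -
    define F where "F = {k. p k \<noteq> 0} \<union> {k. q k \<noteq> 0}"
    have fF: "finite F" using fin q by (auto simp: F_def cheb_rep1_def)
    have "\<And>x. (\<Sum>k\<in>F. (q k - p k) * cheb_T k x) = 0"
    proof -
      fix x
      have "f x = (\<Sum>k\<in>F. q k * cheb_T k x)" by (rule rep1_sum[OF q fF]) (auto simp: F_def)
      moreover have "f x = (\<Sum>k\<in>F. p k * cheb_T k x)" by (rule rep1_sum[OF rp fF]) (auto simp: F_def)
      ultimately show "(\<Sum>k\<in>F. (q k - p k) * cheb_T k x) = 0"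
        by (simp add: left_diff_distrib sum_subtractf)
    qed
    from uniq1[OF fF this] have z: "\<And>k. k \<in> F \<Longrightarrow> q k = p k" by simp
    show "q = p"
    proof
      fix k show "q k = p k"
        using z[of k] by (cases "k \<in> F") (auto simp: F_def)
    qed
  qed
  have "(THE p. cheb_rep1 f p) = p" by (rule the_equality[where P="\<lambda>p. cheb_rep1 f p", OF rp uq])
  then have "cheb_norm1_1 f = (\<Sum>k\<in>{k. p k \<noteq> 0}. \<bar>p k\<bar>)" by (simp add: cheb_norm1_1_def)
  also have "\<dots> = (\<Sum>k\<in>B. \<bar>p k\<bar>)" using sub B by (intro sum.mono_neutral_left) auto
  also have "\<dots> = (\<Sum>k\<in>B. \<bar>c k\<bar>)" by (intro sum.cong) (auto simp: p_def)
  finally show ?thesis .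
qed

lemma uniqm_gen:
  fixes p :: "nat^'n \<Rightarrow> real" and F :: "(nat^'n) set" and S :: "'n set"
  assumes "finite S" "finite F"
  shows "(\<forall>x::real^'n. (\<Sum>\<alpha>\<in>F. p \<alpha> * (\<Prod>i\<in>S. cheb_T (\<alpha>$i) (x$i))) = 0)
     \<Longrightarrow> (\<Sum>\<alpha>\<in>{\<alpha>\<in>F. \<forall>i\<in>S. \<alpha>$i = \<gamma>$i}. p \<alpha>) = 0"
using assms(1) proof (induction S arbitrary: p \<gamma> rule: finite_induct)
  case empty
  then show ?case by simp
next
  case (insert j S)
  note H = insert.prems
  define q where "q k \<alpha> = (if \<alpha>$j = k then p \<alpha> else 0)" for k \<alpha>
  have Q0: "\<forall>x::real^'n. (\<Sum>\<alpha>\<in>F. q k \<alpha> * (\<Prod>i\<in>S. cheb_T (\<alpha>$i) (x$i))) = 0" for k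
  proof
    fix x :: "real^'n"
    define Q where "Q \<alpha> = (\<Prod>i\<in>S. cheb_T (\<alpha>$i) (x$i))" for \<alpha>
    define D where "D = (\<lambda>\<alpha>. \<alpha>$j) ` F"
    have fD: "finite D" using assms(2) by (simp add: D_def)
    have "(\<Sum>k\<in>D. (\<Sum>\<alpha>\<in>{\<alpha>\<in>F. \<alpha>$j = k}. p \<alpha> * Q \<alpha>) * cheb_T k y) = 0" for y
    proof -
      define x' where "x' = (\<chi> i. if i = j then y else x$i)"
      have "(\<Prod>i\<in>insert j S. cheb_T (\<alpha>$i) (x'$i)) = cheb_T (\<alpha>$j) y * Q \<alpha>" for \<alpha>
      proof -
        have "(\<Prod>i\<in>S. cheb_T (\<alpha>$i) (x'$i)) = Q \<alpha>"
          unfolding Q_def using insert.hyps by (intro prod.cong) (auto simp: x'_def)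
        then show ?thesis using insert.hyps by (simp add: x'_def)
      qed
      then have "0 = (\<Sum>\<alpha>\<in>F. p \<alpha> * (cheb_T (\<alpha>$j) y * Q \<alpha>))" using H[rule_format, of x'] by simp
      also have "\<dots> = (\<Sum>k\<in>D. \<Sum>\<alpha>\<in>{\<alpha>\<in>F. \<alpha>$j = k}. p \<alpha> * (cheb_T (\<alpha>$j) y * Q \<alpha>))"
        unfolding D_def by (rule sum.image_gen[OF assms(2)])
      also have "\<dots> = (\<Sum>k\<in>D. (\<Sum>\<alpha>\<in>{\<alpha>\<in>F. \<alpha>$j = k}. p \<alpha> * Q \<alpha>) * cheb_T k y)"
        by (intro sum.cong refl) (auto simp: sum_distrib_right intro!: sum.cong)
      finally show ?thesis by simp
    qed
    from uniq1[OF fD this] have z: "\<And>k. k \<in> D \<Longrightarrow> (\<Sum>\<alpha>\<in>{\<alpha>\<in>F. \<alpha>$j = k}. p \<alpha> * Q \<alpha>) = 0" by blast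
    have "(\<Sum>\<alpha>\<in>F. q k \<alpha> * Q \<alpha>) = (\<Sum>\<alpha>\<in>{\<alpha>\<in>F. \<alpha>$j = k}. p \<alpha> * Q \<alpha>)"
      using assms(2) by (simp add: sum.inter_filter q_def, intro sum.cong refl, simp)
    also have "\<dots> = 0"
    proof (cases "k \<in> D")
      case True then show ?thesis using z by blast
    next
      case False then have "{\<alpha>\<in>F. \<alpha>$j = k} = {}" by (auto simp: D_def)
      then show ?thesis by (simp only: sum.empty)
    qed
    finally show "(\<Sum>\<alpha>\<in>F. q k \<alpha> * (\<Prod>i\<in>S. cheb_T (\<alpha>$i) (x$i))) = 0" by (simp add: Q_def)
  qed
  have "0 = (\<Sum>\<alpha>\<in>{\<alpha>\<in>F. \<forall>i\<in>S. \<alpha>$i = \<gamma>$i}. q (\<gamma>$j) \<alpha>)"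
    using insert.IH[OF Q0] by simp
  also have "\<dots> = (\<Sum>\<alpha>\<in>{\<alpha>\<in>{\<alpha>\<in>F. \<forall>i\<in>S. \<alpha>$i = \<gamma>$i}. \<alpha>$j = \<gamma>$j}. p \<alpha>)"
    using assms(2) by (simp add: sum.inter_filter q_def, intro sum.cong refl, simp)
  also have "{\<alpha>\<in>{\<alpha>\<in>F. \<forall>i\<in>S. \<alpha>$i = \<gamma>$i}. \<alpha>$j = \<gamma>$j} = {\<alpha>\<in>F. \<forall>i\<in>insert j S. \<alpha>$i = \<gamma>$i}"
    by auto
  finally show ?case by simp
qed

lemma uniqm:
  fixes p :: "nat^'n \<Rightarrow> real"
  assumes "finite F" "\<And>x. (\<Sum>\<alpha>\<in>F. p \<alpha> * cheb_Tn \<alpha> x) = 0" "\<gamma> \<in> F"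
  shows "p \<gamma> = 0"
proof -
  have fU: "finite (UNIV::'n set)" by simp
  have H: "\<forall>x::real^'n. (\<Sum>\<alpha>\<in>F. p \<alpha> * (\<Prod>i\<in>UNIV. cheb_T (\<alpha>$i) (x$i))) = 0"
    using assms(2) unfolding cheb_Tn_def by blast
  have "(\<Sum>\<alpha>\<in>{\<alpha>\<in>F. \<forall>i\<in>UNIV. \<alpha>$i = \<gamma>$i}. p \<alpha>) = 0"
    by (rule uniqm_gen[OF fU assms(1) H])
  moreover have "{\<alpha>\<in>F. \<forall>i\<in>UNIV. \<alpha>$i = \<gamma>$i} = {\<gamma>}"
    using assms(3) by (auto simp: vec_eq_iff[symmetric])
  ultimately show ?thesis by simp
qed

lemma repn_sum: "cheb_rep f q \<Longrightarrow> finite F \<Longrightarrow> {k. q k \<noteq> 0} \<subseteq> F \<Longrightarrow> f x = (\<Sum>k\<in>F. q k * cheb_Tn k x)"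
  unfolding cheb_rep_def by (auto intro!: sum.mono_neutral_left)

lemma normn_eq:
  fixes c :: "nat^'n \<Rightarrow> real" and f :: "real^'n \<Rightarrow> real"
  assumes B: "finite B" and f: "\<And>x. f x = (\<Sum>k\<in>B. c k * cheb_Tn k x)"
  shows "cheb_norm1 f = (\<Sum>k\<in>B. \<bar>c k\<bar>)"
proof -
  define p where "p k = (if k \<in> B then c k else 0)" for k
  have sub: "{k. p k \<noteq> 0} \<subseteq> B" by (auto simp: p_def split: if_splits)
  have fin: "finite {k. p k \<noteq> 0}" using sub B finite_subset by blast
  have fp: "f x = (\<Sum>k\<in>B. p k * cheb_Tn k x)" for x
    unfolding f by (intro sum.cong) (auto simp: p_def)
  have rp: "cheb_rep f p"
    unfolding cheb_rep_def using fin fp sub B by (auto intro!: sum.mono_neutral_right)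
  have uq: "q = p" if q: "cheb_rep f q" for q
  proof -
    define F where "F = {k. p k \<noteq> 0} \<union> {k. q k \<noteq> 0}"
    have fF: "finite F" using fin q by (auto simp: F_def cheb_rep_def)
    have "\<And>x. (\<Sum>k\<in>F. (q k - p k) * cheb_Tn k x) = 0"
    proof -
      fix x
      have "f x = (\<Sum>k\<in>F. q k * cheb_Tn k x)" by (rule repn_sum[OF q fF]) (auto simp: F_def)
      moreover have "f x = (\<Sum>k\<in>F. p k * cheb_Tn k x)" by (rule repn_sum[OF rp fF]) (auto simp: F_def)
      ultimately show "(\<Sum>k\<in>F. (q k - p k) * cheb_Tn k x) = 0"
        by (simp add: left_diff_distrib sum_subtractf)
    qed
    from uniqm[OF fF this] have z: "\<And>k. k \<in> F \<Longrightarrow> q k = p k" by simp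
    show "q = p"
    proof
      fix k show "q k = p k"
        using z[of k] by (cases "k \<in> F") (auto simp: F_def)
    qed
  qed
  have "(THE p. cheb_rep f p) = p" by (rule the_equality[where P="\<lambda>p. cheb_rep f p", OF rp uq])
  then have "cheb_norm1 f = (\<Sum>k\<in>{k. p k \<noteq> 0}. \<bar>p k\<bar>)" by (simp add: cheb_norm1_def)
  also have "\<dots> = (\<Sum>k\<in>B. \<bar>p k\<bar>)" using sub B by (intro sum.mono_neutral_left) auto
  also have "\<dots> = (\<Sum>k\<in>B. \<bar>c k\<bar>)" by (intro sum.cong) (auto simp: p_def)
  finally show ?thesis .
qed


definition cspanM :: "nat \<Rightarrow> (real \<Rightarrow> real) \<Rightarrow> bool" where
  "cspanM M f \<longleftrightarrow> (\<exists>c. \<forall>x. f x = (\<Sum>k\<le>M. c k * cheb_T k x))"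

lemma cspanM_mono:
  assumes "cspanM M f" "M \<le> M'" shows "cspanM M' f"
proof -
  obtain c where c: "\<And>x. f x = (\<Sum>k\<le>M. c k * cheb_T k x)" using assms(1) by (auto simp: cspanM_def)
  define c' where "c' k = (if k \<le> M then c k else 0)" for k
  have "f x = (\<Sum>k\<le>M'. c' k * cheb_T k x)" for x
  proof -
    have "(\<Sum>k\<le>M'. c' k * cheb_T k x) = (\<Sum>k\<le>M. c' k * cheb_T k x)"
      using assms(2) by (intro sum.mono_neutral_right) (auto simp: c'_def)
    also have "\<dots> = f x" unfolding c by (intro sum.cong) (auto simp: c'_def)
    finally show ?thesis by simp
  qed
  then show ?thesis by (auto simp: cspanM_def)
qed

lemma cspanM_add: "cspanM M f \<Longrightarrow> cspanM M g \<Longrightarrow> cspanM M (\<lambda>x. f x + g x)"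
  unfolding cspanM_def
proof (elim exE)
  fix c d assume c: "\<forall>x. f x = (\<Sum>k\<le>M. c k * cheb_T k x)" and d: "\<forall>x. g x = (\<Sum>k\<le>M. d k * cheb_T k x)"
  show "\<exists>e. \<forall>x. f x + g x = (\<Sum>k\<le>M. e k * cheb_T k x)"
    by (rule exI[of _ "\<lambda>k. c k + d k"]) (simp add: c d distrib_right sum.distrib)
qed

lemma cspanM_smult: "cspanM M f \<Longrightarrow> cspanM M (\<lambda>x. a * f x)"
  unfolding cspanM_def
proof (elim exE)
  fix c assume c: "\<forall>x. f x = (\<Sum>k\<le>M. c k * cheb_T k x)"
  show "\<exists>e. \<forall>x. a * f x = (\<Sum>k\<le>M. e k * cheb_T k x)"
    by (rule exI[of _ "\<lambda>k. a * c k"]) (simp add: c sum_distrib_left mult.assoc)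
qed

lemma cspanM_zero: "cspanM M (\<lambda>x. 0)"
  unfolding cspanM_def by (rule exI[of _ "\<lambda>k. 0"]) simp

lemma cspanM_sum: "finite S \<Longrightarrow> (\<And>i. i \<in> S \<Longrightarrow> cspanM M (g i)) \<Longrightarrow> cspanM M (\<lambda>x. \<Sum>i\<in>S. g i x)"
  by (induction S rule: finite_induct) (auto intro: cspanM_add cspanM_zero)

lemma delta_sum: "a \<le> M \<Longrightarrow> (\<Sum>k\<le>M. (if k = a then v else 0) * cheb_T k x) = v * cheb_T a x"
proof -
  assume a: "a \<le> M"
  have "(\<Sum>k\<le>M. (if k = a then v else 0) * cheb_T k x) = (\<Sum>k\<le>M. if k = a then v * cheb_T k x else 0)"
    by (rule sum.cong) auto
  then show ?thesis using a by simp
qed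

lemma cheb_T_01: "cheb_T 0 = (\<lambda>x. 1)" "cheb_T (Suc 0) = (\<lambda>x. x)"
  by (rule ext, simp)+

lemma cspanM_T: "k \<le> M \<Longrightarrow> cspanM M (cheb_T k)"
  unfolding cspanM_def by (rule exI[of _ "\<lambda>j. if j = k then 1 else 0"]) (simp add: delta_sum)

lemma cspanM_xT:
  assumes "k < M" shows "cspanM M (\<lambda>x. x * cheb_T k x)"
proof (cases k)
  case 0
  then show ?thesis using cspanM_T[of 1 M] assms by (simp add: cheb_T_01)
next
  case (Suc m)
  have e: "x * cheb_T k x = (1/2) * cheb_T (Suc (Suc m)) x + (1/2) * cheb_T m x" for x
    by (simp add: Suc algebra_simps)
  show ?thesis unfolding e using Suc assms
    by (intro cspanM_add cspanM_smult cspanM_T) auto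
qed

lemma cspanM_x: "cspanM M f \<Longrightarrow> cspanM (Suc M) (\<lambda>x. x * f x)"
proof -
  assume "cspanM M f"
  then obtain c where c: "\<And>x. f x = (\<Sum>k\<le>M. c k * cheb_T k x)" by (auto simp: cspanM_def)
  have e: "x * f x = (\<Sum>k\<le>M. c k * (x * cheb_T k x))" for x
    unfolding c by (simp add: sum_distrib_left algebra_simps)
  show ?thesis unfolding e
    by (intro cspanM_sum cspanM_smult cspanM_xT) auto
qed

lemma cspanM_pow: "m \<le> M \<Longrightarrow> cspanM M (\<lambda>x. x ^ m)"
proof (induction m arbitrary: M)
  case 0
  then show ?case using cspanM_T[of 0 M] by (simp add: cheb_T_01)
next
  case (Suc m)
  have "cspanM (Suc m) (\<lambda>x. x * x ^ m)" by (intro cspanM_x Suc.IH) simp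
  then show ?case using Suc.prems by (auto intro: cspanM_mono)
qed

lemma cspanM_poly: "cspanM N (\<lambda>x. \<Sum>i\<le>N. a i * x ^ i)"
  by (intro cspanM_sum cspanM_smult cspanM_pow) auto

lemma kop1_poly:
  assumes K: "\<And>x y. K x y = (\<Sum>i\<le>N. \<Sum>j\<le>N. c i j * x ^ i * y ^ j)"
    and f: "continuous_on {-R..R} f"
  shows "kop1 R K f x = (\<Sum>i\<le>N. (\<Sum>j\<le>N. c i j * integral {-R..R} (\<lambda>y. y ^ j * f y)) * x ^ i)"
proof -
  have int: "(\<lambda>y. a * (y ^ j * f y)) integrable_on {-R..R}" for j a
    by (intro integrable_continuous_interval continuous_intros f)
  have "kop1 R K f x = integral {-R..R} (\<lambda>y. \<Sum>i\<le>N. \<Sum>j\<le>N. (c i j * x ^ i) * (y ^ j * f y))"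
    unfolding kop1_def K by (simp add: sum_distrib_right sum_distrib_left mult_ac)
  also have "\<dots> = (\<Sum>i\<le>N. integral {-R..R} (\<lambda>y. \<Sum>j\<le>N. (c i j * x ^ i) * (y ^ j * f y)))"
    by (rule integral_sum) (auto intro!: integrable_sum int)
  also have "\<dots> = (\<Sum>i\<le>N. \<Sum>j\<le>N. integral {-R..R} (\<lambda>y. (c i j * x ^ i) * (y ^ j * f y)))"
    by (intro sum.cong refl integral_sum) (auto intro!: int)
  also have "\<dots> = (\<Sum>i\<le>N. \<Sum>j\<le>N. (c i j * x ^ i) * integral {-R..R} (\<lambda>y. y ^ j * f y))"
    by (simp add: integral_mult_right)
  also have "\<dots> = (\<Sum>i\<le>N. (\<Sum>j\<le>N. c i j * integral {-R..R} (\<lambda>y. y ^ j * f y)) * x ^ i)"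
    by (simp add: sum_distrib_right sum_distrib_left mult_ac)
  finally show ?thesis .
qed



lemma sum_PiE_insert:
  assumes "j \<notin> S"
  shows "(\<Sum>g\<in>PiE (insert j S) G. h g) = (\<Sum>k\<in>G j. \<Sum>g\<in>PiE S G. h (g(j:=k)))"
proof -
  have "(\<Sum>g\<in>PiE (insert j S) G. h g) = (\<Sum>(y,g)\<in>G j \<times> PiE S G. h (g(j:=y)))"
    using assms
    by (intro sum.reindex_bij_witness[of _ "\<lambda>(y,g). g(j := y)" "\<lambda>g. (g j, g(j := undefined))"])
       (auto simp: PiE_def extensional_def)
  also have "\<dots> = (\<Sum>k\<in>G j. \<Sum>g\<in>PiE S G. h (g(j:=k)))"
    by (subst sum.cartesian_product) auto
  finally show ?thesis .
qed

lemma sum_abs_prod_bound: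
  fixes a :: "'i \<Rightarrow> nat \<Rightarrow> real"
  assumes "finite S" "\<And>i. i\<in>S \<Longrightarrow> finite (G i)" "\<And>i. i\<in>S \<Longrightarrow> (\<Sum>k\<in>G i. \<bar>a i k\<bar>) \<le> C"
  shows "(\<Sum>g\<in>PiE S G. \<bar>\<Prod>i\<in>S. a i (g i)\<bar>) \<le> C ^ card S"
proof -
  have "(\<Sum>g\<in>PiE S G. \<bar>\<Prod>i\<in>S. a i (g i)\<bar>) = (\<Sum>g\<in>PiE S G. \<Prod>i\<in>S. \<bar>a i (g i)\<bar>)"
    by (simp add: abs_prod)
  also have "\<dots> = (\<Prod>i\<in>S. \<Sum>k\<in>G i. \<bar>a i k\<bar>)"
    using assms by (subst prod_sum_PiE) auto
  also have "\<dots> \<le> (\<Prod>i\<in>S. C)"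
    using assms by (intro prod_mono) (auto intro: sum_nonneg)
  finally show ?thesis by simp
qed

lemma tensor_bound:
  fixes a b :: "'i \<Rightarrow> nat \<Rightarrow> real"
  assumes "finite S" "\<And>i. i\<in>S \<Longrightarrow> finite (G i)" "\<And>i. i\<in>S \<Longrightarrow> (\<Sum>k\<in>G i. \<bar>b i k\<bar>) \<le> 1"
    "\<And>i. i\<in>S \<Longrightarrow> (\<Sum>k\<in>G i. \<bar>a i k - b i k\<bar>) \<le> e" "e \<ge> 0"
  shows "(\<Sum>g\<in>PiE S G. \<bar>(\<Prod>i\<in>S. a i (g i)) - (\<Prod>i\<in>S. b i (g i))\<bar>) \<le> (1+e) ^ card S - 1"
  using assms
proof (induction S rule: finite_induct)
  case empty
  then show ?case by simp
next
  case (insert j S)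
  define A where "A g = (\<Prod>i\<in>S. a i (g i))" for g
  define B where "B g = (\<Prod>i\<in>S. b i (g i))" for g
  have sa: "(\<Sum>k\<in>G i. \<bar>a i k\<bar>) \<le> 1 + e" if i: "i \<in> insert j S" for i
  proof -
    have "(\<Sum>k\<in>G i. \<bar>a i k\<bar>) \<le> (\<Sum>k\<in>G i. \<bar>b i k\<bar> + \<bar>a i k - b i k\<bar>)"
      by (intro sum_mono) linarith
    also have "\<dots> \<le> 1 + e" using insert.prems i by (simp add: sum.distrib add_mono)
    finally show ?thesis .
  qed
  have SA: "(\<Sum>g\<in>PiE S G. \<bar>A g\<bar>) \<le> (1+e) ^ card S"
    unfolding A_def using insert by (intro sum_abs_prod_bound sa) auto
  have IH: "(\<Sum>g\<in>PiE S G. \<bar>A g - B g\<bar>) \<le> (1+e) ^ card S - 1"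
    unfolding A_def B_def using insert by (intro insert.IH) auto
  have upd: "(\<Prod>i\<in>insert j S. c i ((g(j:=k)) i)) = c j k * (\<Prod>i\<in>S. c i (g i))" for c :: "'i \<Rightarrow> nat \<Rightarrow> real" and g k
  proof -
    have "(\<Prod>i\<in>S. c i ((g(j:=k)) i)) = (\<Prod>i\<in>S. c i (g i))"
      using insert.hyps by (intro prod.cong) auto
    then show ?thesis using insert.hyps by simp
  qed
  have "(\<Sum>g\<in>PiE (insert j S) G. \<bar>(\<Prod>i\<in>insert j S. a i (g i)) - (\<Prod>i\<in>insert j S. b i (g i))\<bar>)
      = (\<Sum>k\<in>G j. \<Sum>g\<in>PiE S G. \<bar>a j k * A g - b j k * B g\<bar>)"
    by (simp only: sum_PiE_insert[OF insert.hyps(2)] upd A_def B_def)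
  also have "\<dots> \<le> (\<Sum>k\<in>G j. \<Sum>g\<in>PiE S G. \<bar>a j k - b j k\<bar> * \<bar>A g\<bar> + \<bar>b j k\<bar> * \<bar>A g - B g\<bar>)"
  proof (intro sum_mono)
    fix k g
    have "a j k * A g - b j k * B g = (a j k - b j k) * A g + b j k * (A g - B g)"
      by (simp add: algebra_simps)
    then show "\<bar>a j k * A g - b j k * B g\<bar> \<le> \<bar>a j k - b j k\<bar> * \<bar>A g\<bar> + \<bar>b j k\<bar> * \<bar>A g - B g\<bar>"
      by (metis abs_mult abs_triangle_ineq)
  qed
  also have "\<dots> = (\<Sum>k\<in>G j. \<bar>a j k - b j k\<bar>) * (\<Sum>g\<in>PiE S G. \<bar>A g\<bar>)
                 + (\<Sum>k\<in>G j. \<bar>b j k\<bar>) * (\<Sum>g\<in>PiE S G. \<bar>A g - B g\<bar>)"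
    by (simp only: sum.distrib sum_product)
  also have "\<dots> \<le> e * (1+e) ^ card S + 1 * ((1+e) ^ card S - 1)"
  proof (intro add_mono mult_mono)
    show "(\<Sum>k\<in>G j. \<bar>a j k - b j k\<bar>) \<le> e" "(\<Sum>k\<in>G j. \<bar>b j k\<bar>) \<le> 1" using insert.prems by auto
  qed (use SA IH insert.prems in \<open>auto intro: sum_nonneg\<close>)
  also have "\<dots> = (1+e) ^ card (insert j S) - 1"
    using insert.hyps by (simp add: algebra_simps)
  finally show ?case .
qed



lemma integral_lborel_prod_Basis:
  fixes f :: "'a::euclidean_space \<Rightarrow> real \<Rightarrow> real"
  assumes int: "\<And>b. b\<in>Basis \<Longrightarrow> integrable lborel (f b)"
  shows "(\<integral>x. (\<Prod>b\<in>Basis. f b (x \<bullet> b)) \<partial>(lborel::'a measure)) = (\<Prod>b\<in>Basis. (\<integral>t. f b t \<partial>lborel))"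
proof -
  interpret product_sigma_finite "\<lambda>_::'a. (lborel::real measure)"
    by standard
  have m[measurable]: "f b \<in> borel_measurable borel" if "b \<in> Basis" for b
    using borel_measurable_integrable[OF int[OF that]] by simp
  have eq: "(lborel::'a measure) = distr (\<Pi>\<^sub>M b\<in>Basis. lborel) borel (\<lambda>f. \<Sum>b\<in>Basis. f b *\<^sub>R b)"
    by (rule lborel_eq)
  have "(\<integral>x. (\<Prod>b\<in>Basis. f b (x \<bullet> b)) \<partial>(lborel::'a measure))
     = (\<integral>x. (\<Prod>b\<in>Basis. f b (x \<bullet> b)) \<partial>(distr (\<Pi>\<^sub>M b\<in>Basis. lborel) borel (\<lambda>f. \<Sum>b\<in>Basis. f b *\<^sub>R b)))"
    by (simp only: eq)
  also have "\<dots> = (\<integral>y. (\<Prod>b\<in>Basis. f b ((\<Sum>b'\<in>Basis. y b' *\<^sub>R b') \<bullet> b)) \<partial>(\<Pi>\<^sub>M b\<in>Basis. lborel))"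
    by (rule integral_distr) measurable
  also have "\<dots> = (\<integral>y. (\<Prod>b\<in>Basis. f b (y b)) \<partial>(\<Pi>\<^sub>M b\<in>Basis. lborel))"
  proof (intro Bochner_Integration.integral_cong refl prod.cong)
    fix y and b :: 'a assume "b \<in> Basis"
    then show "f b ((\<Sum>b'\<in>Basis. y b' *\<^sub>R b') \<bullet> b) = f b (y b)"
      by (simp add: inner_sum_left inner_Basis if_distrib sum.delta cong: if_cong)
  qed
  also have "\<dots> = (\<Prod>b\<in>Basis. (\<integral>t. f b t \<partial>lborel))"
    by (rule product_integral_prod) (auto intro: int)
  finally show ?thesis .
qed

lemma integral_lborel_prod_vec:
  fixes f :: "'n::finite \<Rightarrow> real \<Rightarrow> real"
  assumes int: "\<And>i. integrable lborel (f i)"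
  shows "(\<integral>x. (\<Prod>i\<in>UNIV. f i (x$i)) \<partial>(lborel::(real^'n) measure)) = (\<Prod>i\<in>UNIV. (\<integral>t. f i t \<partial>lborel))"
proof -
  define F where "F b = f (SOME i. b = axis i 1)" for b :: "real^'n"
  have Fa: "F (axis i 1) = f i" for i by (simp add: F_def axis_eq_axis)
  have B: "(Basis :: (real^'n) set) = (\<lambda>i. axis i 1) ` UNIV" by (auto simp: Basis_vec_def)
  have inj: "inj (\<lambda>i::'n. axis i (1::real))" by (auto simp: inj_on_def axis_eq_axis)
  have "(\<Prod>i\<in>UNIV. f i (x$i)) = (\<Prod>b\<in>Basis. F b (x \<bullet> b))" for x :: "real^'n"
    unfolding B by (subst prod.reindex[OF inj]) (simp add: Fa inner_axis)
  then have "(\<integral>x. (\<Prod>i\<in>UNIV. f i (x$i)) \<partial>(lborel::(real^'n) measure)) = (\<integral>x. (\<Prod>b\<in>Basis. F b (x \<bullet> b)) \<partial>(lborel::(real^'n) measure))"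
    by simp
  also have "\<dots> = (\<Prod>b\<in>Basis. (\<integral>t. F b t \<partial>lborel))"
    by (rule integral_lborel_prod_Basis) (auto simp: B Fa int)
  also have "\<dots> = (\<Prod>i\<in>UNIV. (\<integral>t. f i t \<partial>lborel))"
    unfolding B by (subst prod.reindex[OF inj]) (simp add: Fa)
  finally show ?thesis .
qed

lemma fubini_cube:
  fixes h :: "'n::finite \<Rightarrow> real \<Rightarrow> real" and R :: real
  assumes cont: "\<And>i. continuous_on UNIV (h i)"
  shows "integral (cbox (\<chi> i. -R) (\<chi> i. R)) (\<lambda>y::real^'n. \<Prod>i\<in>UNIV. h i (y$i))
       = (\<Prod>i\<in>UNIV. integral {-R..R} (h i))"
proof -
  define C :: "(real^'n) set" where "C = cbox (\<chi> i. -R) (\<chi> i. R)"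
  have ci: "continuous_on S (\<lambda>y::real^'n. h i (y$i))" for i S
    by (rule continuous_on_compose2[OF cont[of i]]) (auto intro: continuous_intros)
  have cC: "continuous_on C (\<lambda>y::real^'n. \<Prod>i\<in>UNIV. h i (y$i))"
    by (intro continuous_on_prod ci)
  have si: "set_integrable lborel C (\<lambda>y::real^'n. \<Prod>i\<in>UNIV. h i (y$i))"
    unfolding set_integrable_def C_def by (rule borel_integrable_compact[OF compact_cbox]) (use cC C_def in simp)
  have si1: "set_integrable lborel {-R..R} (h i)" for i
    unfolding set_integrable_def
    by (rule borel_integrable_compact[OF compact_Icc]) (rule continuous_on_subset[OF cont]; simp)
  have ind: "indicator C y *\<^sub>R (\<Prod>i\<in>UNIV. h i (y$i)) = (\<Prod>i\<in>UNIV. indicator {-R..R} (y$i) *\<^sub>R h i (y$i))"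
    for y :: "real^'n"
  proof (cases "y \<in> C")
    case True
    then have "\<forall>i. y$i \<in> {-R..R}" by (auto simp: C_def mem_box_cart)
    then show ?thesis using True by simp
  next
    case False
    then obtain i where "y$i \<notin> {-R..R}" by (auto simp: C_def mem_box_cart)
    then have "(\<Prod>i\<in>UNIV. indicator {-R..R} (y$i) *\<^sub>R h i (y$i)) = 0"
      by (intro prod_zero) (simp, rule bexI[of _ i], simp add: indicator_def, simp)
    then show ?thesis using False by simp
  qed
  have "integral C (\<lambda>y::real^'n. \<Prod>i\<in>UNIV. h i (y$i)) = (LINT y:C|lborel. (\<Prod>i\<in>UNIV. h i (y$i)))"
    by (rule set_borel_integral_eq_integral(2)[OF si, symmetric])
  also have "\<dots> = (\<integral>y. (\<Prod>i\<in>UNIV. indicator {-R..R} (y$i) *\<^sub>R h i (y$i)) \<partial>lborel)"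
    unfolding set_lebesgue_integral_def ind ..
  also have "\<dots> = (\<Prod>i\<in>UNIV. (\<integral>t. indicator {-R..R} t *\<^sub>R h i t \<partial>lborel))"
    by (rule integral_lborel_prod_vec) (use si1 in \<open>simp add: set_integrable_def\<close>)
  also have "\<dots> = (\<Prod>i\<in>UNIV. integral {-R..R} (h i))"
    by (intro prod.cong refl) (use set_borel_integral_eq_integral(2)[OF si1] in \<open>simp add: set_lebesgue_integral_def\<close>)
  finally show ?thesis by (simp add: C_def)
qed



lemma cspanM_diff: "cspanM M f \<Longrightarrow> cspanM M g \<Longrightarrow> cspanM M (\<lambda>x. f x - g x)"
  using cspanM_add[of M f "\<lambda>x. (-1) * g x"] cspanM_smult[of M g "-1"] by simp

lemma geom_eq: "(1 + e) ^ n - 1 = e * (\<Sum>i<n. (1 + e) ^ i :: real)"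
  by (induction n) (auto simp: algebra_simps)

theorem lemma15:
  fixes d :: nat and R \<epsilon> :: real and K :: "real \<Rightarrow> real \<Rightarrow> real" and \<alpha> :: "nat ^ 'n"
  assumes "R > 1" and "\<epsilon> \<ge> 0"
    and "is_bivariate_poly K"
    and "\<And>k. k \<le> d \<Longrightarrow> cheb_norm1_1 (\<lambda>x. kop1 R K (cheb_T k) x - cheb_T k x) \<le> \<epsilon>"
    and "\<And>i. \<alpha> $ i \<le> d"
  shows "cheb_norm1 (\<lambda>x. kopn R K (cheb_Tn \<alpha>) x - cheb_Tn \<alpha> x)
           \<le> \<epsilon> * (\<Sum>i<CARD('n). (1 + \<epsilon>) ^ i)
       \<and> (\<epsilon> \<le> 1 / real CARD('n) \<longrightarrow>
           cheb_norm1 (\<lambda>x. kopn R K (cheb_Tn \<alpha>) x - cheb_Tn \<alpha> x)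
             \<le> exp 1 * \<epsilon> * real CARD('n))"
proof -
  obtain N c where K: "\<And>x y. K x y = (\<Sum>i\<le>N. \<Sum>j\<le>N. c i j * x ^ i * y ^ j)"
    using assms(3) unfolding is_bivariate_poly_def by blast
  define M where "M = max N d"
  have cK: "continuous_on UNIV (K a)" for a
  proof -
    have "K a = (\<lambda>y. \<Sum>i\<le>N. \<Sum>j\<le>N. c i j * a ^ i * y ^ j)" using K by (simp add: fun_eq_iff)
    then show ?thesis by (auto intro!: continuous_intros)
  qed
  have span: "cspanM M (\<lambda>x. kop1 R K (cheb_T k) x - cheb_T k x)" if "k \<le> d" for k
  proof -
    have "cspanM N (\<lambda>x. kop1 R K (cheb_T k) x)"
      unfolding kop1_poly[OF K cheb_T_cont] by (rule cspanM_poly)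
    then have "cspanM M (\<lambda>x. kop1 R K (cheb_T k) x)" by (rule cspanM_mono) (simp add: M_def)
    moreover have "cspanM M (cheb_T k)" using that by (intro cspanM_T) (simp add: M_def)
    ultimately show ?thesis by (rule cspanM_diff)
  qed
  have "\<forall>k. \<exists>C. k \<le> d \<longrightarrow> (\<forall>x. kop1 R K (cheb_T k) x - cheb_T k x = (\<Sum>j\<le>M. C j * cheb_T j x))"
  proof
    fix k
    show "\<exists>C. k \<le> d \<longrightarrow> (\<forall>x. kop1 R K (cheb_T k) x - cheb_T k x = (\<Sum>j\<le>M. C j * cheb_T j x))"
    proof (cases "k \<le> d")
      case True
      then obtain C where "\<forall>x. kop1 R K (cheb_T k) x - cheb_T k x = (\<Sum>j\<le>M. C j * cheb_T j x)"
        using span[OF True] unfolding cspanM_def by (elim exE)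
      then show ?thesis by (intro exI[of _ C]) simp
    qed simp
  qed
  then obtain C where C: "\<And>k x. k \<le> d \<Longrightarrow> kop1 R K (cheb_T k) x - cheb_T k x = (\<Sum>j\<le>M. C k j * cheb_T j x)"
    by metis
  have normC: "(\<Sum>j\<le>M. \<bar>C k j\<bar>) \<le> \<epsilon>" if "k \<le> d" for k
    using assms(4)[OF that] norm1_eq[of "{..M}" "\<lambda>x. kop1 R K (cheb_T k) x - cheb_T k x" "C k"] C[OF that]
    by simp
  define \<delta> :: "nat \<Rightarrow> nat \<Rightarrow> real" where "\<delta> k j = (if j = k then 1 else 0)" for k j
  define Q :: "nat \<Rightarrow> nat \<Rightarrow> real" where "Q k j = C k j + \<delta> k j" for k j
  have T\<delta>: "cheb_T k t = (\<Sum>j\<le>M. \<delta> k j * cheb_T j t)" if "k \<le> M" for k t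
    using delta_sum[OF that, of 1 t] by (simp add: \<delta>_def)
  have kQ: "kop1 R K (cheb_T k) t = (\<Sum>j\<le>M. Q k j * cheb_T j t)" if "k \<le> d" for k t
  proof -
    have "kop1 R K (cheb_T k) t = (\<Sum>j\<le>M. C k j * cheb_T j t) + cheb_T k t" using C[OF that, of t] by simp
    also have "\<dots> = (\<Sum>j\<le>M. Q k j * cheb_T j t)"
      using T\<delta>[of k t] that by (simp add: Q_def M_def distrib_right sum.distrib)
    finally show ?thesis .
  qed
  have \<alpha>d: "\<alpha>$i \<le> d" for i using assms(5) .
  have \<alpha>M: "\<alpha>$i \<le> M" for i using assms(5)[of i] by (simp add: M_def)
  define P where "P = PiE (UNIV::'n set) (\<lambda>_. {..M})"
  define D where "D g = (\<Prod>i\<in>UNIV. Q (\<alpha>$i) (g i)) - (\<Prod>i\<in>UNIV. \<delta> (\<alpha>$i) (g i))" for g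
  have fP: "finite P" by (simp add: P_def finite_PiE)
  have kop: "kopn R K (cheb_Tn \<alpha>) x = (\<Prod>i\<in>UNIV. kop1 R K (cheb_T (\<alpha>$i)) (x$i))" for x
  proof -
    have "kopn R K (cheb_Tn \<alpha>) x = integral (cbox (\<chi> i. -R) (\<chi> i. R))
            (\<lambda>y::real^'n. \<Prod>i\<in>UNIV. K (x$i) (y$i) * cheb_T (\<alpha>$i) (y$i))"
      unfolding kopn_def cheb_Tn_def by (simp add: prod.distrib)
    also have "\<dots> = (\<Prod>i\<in>UNIV. integral {-R..R} (\<lambda>t. K (x$i) t * cheb_T (\<alpha>$i) t))"
      by (rule fubini_cube[where h = "\<lambda>i t. K (x$i) t * cheb_T (\<alpha>$i) t"])
         (rule continuous_on_mult[OF cK cheb_T_cont])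
    finally show ?thesis by (simp add: kop1_def)
  qed
  have expand: "(\<Prod>i\<in>UNIV. \<Sum>j\<le>M. f i j * cheb_T j (x$i))
      = (\<Sum>g\<in>P. (\<Prod>i\<in>UNIV. f i (g i)) * cheb_Tn (vec_lambda g) x)"
    for f :: "'n \<Rightarrow> nat \<Rightarrow> real" and x :: "real^'n"
  proof -
    have "(\<Prod>i\<in>UNIV. \<Sum>j\<le>M. f i j * cheb_T j (x$i)) = (\<Sum>g\<in>P. \<Prod>i\<in>UNIV. f i (g i) * cheb_T (g i) (x$i))"
      unfolding P_def by (rule prod_sum_PiE) auto
    also have "\<dots> = (\<Sum>g\<in>P. (\<Prod>i\<in>UNIV. f i (g i)) * cheb_Tn (vec_lambda g) x)"
      by (simp add: cheb_Tn_def prod.distrib)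
    finally show ?thesis .
  qed
  have inj: "inj_on vec_lambda P" by (auto simp: inj_on_def)
  have diff: "kopn R K (cheb_Tn \<alpha>) x - cheb_Tn \<alpha> x = (\<Sum>\<beta>\<in>vec_lambda ` P. D (vec_nth \<beta>) * cheb_Tn \<beta> x)" for x
  proof -
    have "kopn R K (cheb_Tn \<alpha>) x = (\<Prod>i\<in>UNIV. \<Sum>j\<le>M. Q (\<alpha>$i) j * cheb_T j (x$i))"
      using kop kQ[OF \<alpha>d] by simp
    moreover have "cheb_Tn \<alpha> x = (\<Prod>i\<in>UNIV. \<Sum>j\<le>M. \<delta> (\<alpha>$i) j * cheb_T j (x$i))"
      unfolding cheb_Tn_def using T\<delta>[OF \<alpha>M] by simp
    ultimately have "kopn R K (cheb_Tn \<alpha>) x - cheb_Tn \<alpha> x = (\<Sum>g\<in>P. D g * cheb_Tn (vec_lambda g) x)"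
      by (simp add: expand D_def left_diff_distrib sum_subtractf)
    also have "\<dots> = (\<Sum>\<beta>\<in>vec_lambda ` P. D (vec_nth \<beta>) * cheb_Tn \<beta> x)"
      by (subst sum.reindex[OF inj]) (simp add: vec_lambda_inverse)
    finally show ?thesis .
  qed
  have "cheb_norm1 (\<lambda>x. kopn R K (cheb_Tn \<alpha>) x - cheb_Tn \<alpha> x) = (\<Sum>\<beta>\<in>vec_lambda ` P. \<bar>D (vec_nth \<beta>)\<bar>)"
    by (rule normn_eq) (use fP diff in auto)
  also have "\<dots> = (\<Sum>g\<in>P. \<bar>D g\<bar>)"
    by (subst sum.reindex[OF inj]) (simp add: vec_lambda_inverse)
  also have "\<dots> \<le> (1 + \<epsilon>) ^ card (UNIV::'n set) - 1"
    unfolding D_def P_def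
  proof (rule tensor_bound[where a="\<lambda>i. Q (\<alpha>$i)" and b = "\<lambda>i. \<delta> (\<alpha>$i)"])
    fix i :: 'n
    have "(\<Sum>k\<le>M. \<bar>\<delta> (\<alpha>$i) k\<bar>) = (\<Sum>k\<le>M. if k = \<alpha>$i then 1 else 0)"
      by (rule sum.cong) (auto simp: \<delta>_def)
    then show "(\<Sum>k\<le>M. \<bar>\<delta> (\<alpha>$i) k\<bar>) \<le> 1" using \<alpha>M[of i] by simp
    show "(\<Sum>k\<le>M. \<bar>Q (\<alpha>$i) k - \<delta> (\<alpha>$i) k\<bar>) \<le> \<epsilon>"
      using normC[OF \<alpha>d] by (simp add: Q_def)
  qed (use assms(2) in auto)
  also have "\<dots> = \<epsilon> * (\<Sum>i<CARD('n). (1 + \<epsilon>) ^ i)" by (rule geom_eq)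
  finally have b1: "cheb_norm1 (\<lambda>x. kopn R K (cheb_Tn \<alpha>) x - cheb_Tn \<alpha> x) \<le> \<epsilon> * (\<Sum>i<CARD('n). (1 + \<epsilon>) ^ i)" .
  have b2: "\<epsilon> * (\<Sum>i<CARD('n). (1 + \<epsilon>) ^ i) \<le> exp 1 * \<epsilon> * real CARD('n)" if e: "\<epsilon> \<le> 1 / real CARD('n)"
  proof -
    have pos: "real CARD('n) > 0" by simp
    have ne: "real CARD('n) * \<epsilon> \<le> 1" using e pos by (simp add: field_simps)
    have "(1 + \<epsilon>) ^ i \<le> exp 1" if "i < CARD('n)" for i
    proof -
      have "(1 + \<epsilon>) ^ i \<le> exp \<epsilon> ^ i"
        using assms(2) by (intro power_mono) (auto simp: exp_ge_add_one_self)
      also have "\<dots> = exp (real i * \<epsilon>)" by (simp add: exp_of_nat_mult)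
      also have "\<dots> \<le> exp 1"
      proof -
        have "real i * \<epsilon> \<le> real CARD('n) * \<epsilon>"
          using that assms(2) by (intro mult_right_mono) auto
        then show ?thesis using ne by simp
      qed
      finally show ?thesis .
    qed
    then have "(\<Sum>i<CARD('n). (1 + \<epsilon>) ^ i) \<le> (\<Sum>i<CARD('n). exp 1)" by (intro sum_mono) auto
    then have "(\<Sum>i<CARD('n). (1 + \<epsilon>) ^ i) \<le> real CARD('n) * exp 1" by simp
    then have "\<epsilon> * (\<Sum>i<CARD('n). (1 + \<epsilon>) ^ i) \<le> \<epsilon> * (real CARD('n) * exp 1)"
      using assms(2) by (intro mult_left_mono)
    then show ?thesis by (simp add: mult_ac)
  qed
  show ?thesis using b1 b2 by auto
qed


end
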